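(* Let $V$ be countably infinite with a fixed bijection $\xi:V\to\mathbb N$. For every finite simple graph $H$ and every $G\in\mathscr{G}(V)$, the set $S(H,G)$ is a closed nonempty subset of $[0,1]$. For $H=K_2$ (a single edge), $S(K_2,G)$ is a closed subinterval $[a,b]$ of $[0,1]$ (possibly with $a=b$). Conversely, for every $0\le a\le b\le1$ there exists $G\in\mathscr{G}(V)$ with $S(K_2,G)=[a,b]$.
   Context: $K_V$ is the set of $2$-element subsets of $V$; $\mathscr{G}(V)$ is the set of simple graphs on $V$ identified with their edge sets. For $G\in\mathscr{G}(V)$ and $n\in\mathbb N$, $G_V[n]$ is the finite induced subgraph of $G$ on the vertices $\xi^{-1}(1),\dots,\xi^{-1}(n)$. For finite simple graphs $H$ and $F$, $\mathrm{ind}(H,F)$ is the number of injective maps $V(H)\to V(F)$ that are isomorphisms of $H$ onto the induced subgraph of $F$ on the image, and $t_{\mathrm{ind}}(H,F) := \mathrm{ind}(H,F)\,(|V(F)|-|V(H)|)!/|V(F)|!$ (taken to be $0$ if $|V(F)|<|V(H)|$). $S(H,G)$ is the set of subsequential limits (accumulation points) of the sequence $n\mapsto t_{\mathrm{ind}}(H,G_V[n])$. Note $t_{\mathrm{ind}}(K_2,F)$ equals the edge density $e(F):=|E(F)|/\binom{|V(F)|}{2}$. *)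

theory Defs
  imports "HOL-Analysis.Analysis" "HOL-Library.FuncSet"
begin

definition two_subsets :: "'v set \<Rightarrow> 'v set set" where
  "two_subsets V = {e. e \<subseteq> V \<and> card e = 2}"

definition graphs_on :: "'v set \<Rightarrow> 'v set set set" where
  "graphs_on V = Pow (two_subsets V)"

definition finite_simple_graph :: "'a set \<Rightarrow> 'a set set \<Rightarrow> bool" where
  "finite_simple_graph VH EH \<longleftrightarrow> finite VH \<and> EH \<subseteq> two_subsets VH"

text \<open>ind(H,F): number of injective maps V(H) -> V(F) that are isomorphisms of H
  onto the induced subgraph of F on the image (maps taken extensionally on V(H)).\<close>
definition ind :: "'a set \<Rightarrow> 'a set set \<Rightarrow> 'b set \<Rightarrow> 'b set set \<Rightarrow> nat" where
  "ind VH EH VF EF = card {f \<in> VH \<rightarrow>\<^sub>E VF. inj_on f VH \<and>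
      (\<forall>u\<in>VH. \<forall>v\<in>VH. u \<noteq> v \<longrightarrow> ({u, v} \<in> EH \<longleftrightarrow> {f u, f v} \<in> EF))}"

definition t_ind :: "'a set \<Rightarrow> 'a set set \<Rightarrow> 'b set \<Rightarrow> 'b set set \<Rightarrow> real" where
  "t_ind VH EH VF EF =
     (if card VF < card VH then 0
      else real (ind VH EH VF EF) * fact (card VF - card VH) / fact (card VF))"

definition trunc_vertices :: "('v \<Rightarrow> nat) \<Rightarrow> nat \<Rightarrow> 'v set" where
  "trunc_vertices \<xi> n = {v. \<xi> v \<in> {1..n}}"

definition trunc_edges :: "('v \<Rightarrow> nat) \<Rightarrow> 'v set set \<Rightarrow> nat \<Rightarrow> 'v set set" where
  "trunc_edges \<xi> G n = {e \<in> G. e \<subseteq> trunc_vertices \<xi> n}"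

definition S_lim :: "('v \<Rightarrow> nat) \<Rightarrow> 'a set \<Rightarrow> 'a set set \<Rightarrow> 'v set set \<Rightarrow> real set" where
  "S_lim \<xi> VH EH G =
     {L. \<exists>r. strict_mono r \<and>
        ((\<lambda>k. t_ind VH EH (trunc_vertices \<xi> (r k)) (trunc_edges \<xi> G (r k))) \<longlonglongrightarrow> L)}"

definition K2_V :: "nat set" where "K2_V = {0, 1}"
definition K2_E :: "nat set set" where "K2_E = {{0, 1}}"

end

theory Submission
  imports Defs
begin


definition cl :: "(nat \<Rightarrow> real) \<Rightarrow> real set" where
  "cl x = {L. \<exists>r. strict_mono r \<and> (\<lambda>k. x (r k)) \<longlonglongrightarrow> L}"

lemma cl_iff: "L \<in> cl x \<longleftrightarrow> (\<forall>e>0. \<forall>N. \<exists>n\<ge>N. \<bar>x n - L\<bar> < e)"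
proof
  assume "L \<in> cl x"
  then obtain r where r: "strict_mono r" "(\<lambda>k. x (r k)) \<longlonglongrightarrow> L" by (auto simp: cl_def)
  show "\<forall>e>0. \<forall>N. \<exists>n\<ge>N. \<bar>x n - L\<bar> < e"
  proof (intro allI impI)
    fix e :: real and N :: nat assume "e > 0"
    from LIMSEQ_D[OF r(2) this] obtain no where no: "\<And>k. k \<ge> no \<Longrightarrow> norm (x (r k) - L) < e" by blast
    have "r (max no N) \<ge> N" using seq_suble[OF r(1), of "max no N"] by linarith
    moreover have "\<bar>x (r (max no N)) - L\<bar> < e" using no[of "max no N"] by simp
    ultimately show "\<exists>n\<ge>N. \<bar>x n - L\<bar> < e" by blast
  qed
next
  assume H: "\<forall>e>0. \<forall>N. \<exists>n\<ge>N. \<bar>x n - L\<bar> < e"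
  have "\<exists>f. \<forall>n. (\<bar>x (f n) - L\<bar> < 1 / (real n + 1)) \<and> f n < f (Suc n)"
  proof (rule dependent_nat_choice)
    show "\<exists>m. \<bar>x m - L\<bar> < 1 / (real 0 + 1)" using H[rule_format, of 1 0] by auto
  next
    fix m n assume "\<bar>x m - L\<bar> < 1 / (real n + 1)"
    have "(1::real) / (real (Suc n) + 1) > 0" by simp
    from H[rule_format, OF this, of "Suc m"] obtain y where "y \<ge> Suc m" "\<bar>x y - L\<bar> < 1 / (real (Suc n) + 1)" by blast
    then show "\<exists>y. \<bar>x y - L\<bar> < 1 / (real (Suc n) + 1) \<and> m < y" by auto
  qed
  then obtain f where f: "\<And>n. \<bar>x (f n) - L\<bar> < 1 / (real n + 1)" "\<And>n. f n < f (Suc n)" by blast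
  have "strict_mono f" using f(2) by (simp add: strict_mono_Suc_iff)
  moreover have "(\<lambda>k. x (f k)) \<longlonglongrightarrow> L"
  proof (rule LIMSEQ_I)
    fix r :: real assume "r > 0"
    then obtain no where no: "inverse (real (Suc no)) < r" using reals_Archimedean by blast
    show "\<exists>no. \<forall>n\<ge>no. norm (x (f n) - L) < r"
    proof (intro exI allI impI)
      fix n assume "n \<ge> no"
      then have "1 / (real n + 1) \<le> inverse (real (Suc no))"
        by (simp add: field_simps)
      then show "norm (x (f n) - L) < r" using f(1)[of n] no by simp
    qed
  qed
  ultimately show "L \<in> cl x" by (auto simp: cl_def)
qed

lemma cl_basic:
  assumes "\<And>n. x n \<in> {0..1}"
  shows "closed (cl x) \<and> cl x \<noteq> {} \<and> cl x \<subseteq> {0..1}"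
proof (intro conjI)
  show "closed (cl x)"
  proof -
    have "L \<in> cl x" if A: "\<forall>e>0. \<exists>y\<in>cl x. dist y L < e" for L
      unfolding cl_iff
    proof (intro allI impI)
      fix e :: real and N :: nat assume "e > 0"
      then obtain y where y: "y \<in> cl x" "dist y L < e/2" using A[rule_format, of "e/2"] \<open>e>0\<close> by auto
      from y(1)[unfolded cl_iff, rule_format, of "e/2" N] \<open>e>0\<close> obtain n where "n \<ge> N" "\<bar>x n - y\<bar> < e/2" by auto
      moreover have "\<bar>y - L\<bar> < e/2" using y(2) by (simp add: dist_real_def)
      ultimately have "\<bar>x n - L\<bar> < e" by linarith
      then show "\<exists>n\<ge>N. \<bar>x n - L\<bar> < e" using \<open>n \<ge> N\<close> by blast
    qed
    then have "closure (cl x) \<subseteq> cl x" by (auto simp: closure_approachable)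
    then show ?thesis by (simp add: closure_subset_eq)
  qed
  show "cl x \<noteq> {}"
  proof -
    have "seq_compact {0..1::real}" by (simp add: compact_imp_seq_compact)
    then obtain l r where "strict_mono (r::nat\<Rightarrow>nat)" "(x \<circ> r) \<longlonglongrightarrow> l"
      using assms by (metis seq_compactE)
    then have "l \<in> cl x" by (auto simp: cl_def o_def)
    then show ?thesis by auto
  qed
  show "cl x \<subseteq> {0..1}"
  proof
    fix L assume "L \<in> cl x"
    then obtain r where r: "strict_mono r" "(\<lambda>k. x (r k)) \<longlonglongrightarrow> L" by (auto simp: cl_def)
    have "L \<in> {0..1}"
      by (rule Lim_in_closed_set[OF closed_atLeastAtMost _ _ r(2)]) (use assms in auto)
    then show "L \<in> {0..1}" .
  qed
qed

lemma crossing: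
  fixes x :: "nat \<Rightarrow> real"
  shows "x n1 < c \<Longrightarrow> x (n1 + k) \<ge> c \<Longrightarrow> \<exists>m. n1 \<le> m \<and> x m < c \<and> x (Suc m) \<ge> c"
proof (induction k)
  case 0 then show ?case by simp
next
  case (Suc k)
  show ?case
  proof (cases "x (n1 + k) \<ge> c")
    case True then show ?thesis using Suc by blast
  next
    case False then show ?thesis using Suc.prems by (intro exI[of _ "n1+k"]) auto
  qed
qed

lemma cl_convex:
  assumes small: "\<forall>e>0. \<exists>N. \<forall>n\<ge>N. \<bar>x (Suc n) - x n\<bar> < e"
    and p: "p \<in> cl x" and q: "q \<in> cl x" and c: "p \<le> c" "c \<le> q"
  shows "c \<in> cl x"
proof (cases "c = p \<or> c = q")
  case True then show ?thesis using p q by auto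
next
  case False
  then have pc: "p < c" and cq: "c < q" using c by auto
  show ?thesis unfolding cl_iff
  proof (intro allI impI)
    fix e :: real and N assume "e > 0"
    from small[rule_format, OF this] obtain M where M: "\<And>n. n \<ge> M \<Longrightarrow> \<bar>x (Suc n) - x n\<bar> < e" by blast
    from p[unfolded cl_iff, rule_format, of "c - p" "max M N"] pc
    obtain n1 where n1: "n1 \<ge> max M N" "\<bar>x n1 - p\<bar> < c - p" by auto
    from q[unfolded cl_iff, rule_format, of "q - c" "n1"] cq
    obtain n2 where n2: "n2 \<ge> n1" "\<bar>x n2 - q\<bar> < q - c" by auto
    have "x n1 < c" using n1 by linarith
    moreover have "x (n1 + (n2 - n1)) \<ge> c" using n2 by simp
    ultimately obtain m where m: "n1 \<le> m" "x m < c" "x (Suc m) \<ge> c" using crossing by blast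
    have "\<bar>x (Suc m) - x m\<bar> < e" using M[of m] m n1 by simp
    then have "\<bar>x m - c\<bar> < e" using m by linarith
    then show "\<exists>n\<ge>N. \<bar>x n - c\<bar> < e" using m n1 by (intro exI[of _ m]) auto
  qed
qed

lemma cl_interval:
  assumes x01: "\<And>n. x n \<in> {0..1}"
    and small: "\<forall>e>0. \<exists>N. \<forall>n\<ge>N. \<bar>x (Suc n) - x n\<bar> < e"
  shows "\<exists>a b. 0 \<le> a \<and> a \<le> b \<and> b \<le> 1 \<and> cl x = {a..b}"
proof -
  have B: "closed (cl x)" "cl x \<noteq> {}" "cl x \<subseteq> {0..1}" using cl_basic[OF x01] by auto
  have bb: "bdd_below (cl x)" "bdd_above (cl x)" using B(3)
    by (meson bdd_above_Icc bdd_above_mono bdd_below_Icc bdd_below_mono)+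
  define a where "a = Inf (cl x)"
  define b where "b = Sup (cl x)"
  have a: "a \<in> cl x" unfolding a_def using closed_contains_Inf B bb by blast
  have b: "b \<in> cl x" unfolding b_def using closed_contains_Sup B bb by blast
  have "cl x = {a..b}"
  proof
    show "cl x \<subseteq> {a..b}" unfolding a_def b_def using bb by (auto intro: cInf_lower cSup_upper)
    show "{a..b} \<subseteq> cl x" using cl_convex[OF small a b] by auto
  qed
  moreover have "0 \<le> a" "b \<le> 1" using a b B(3) by auto
  moreover have "a \<le> b" using a calculation(1) by auto
  ultimately show ?thesis by blast
qed



lemma prod_fact: "k \<le> N \<Longrightarrow> prod ((-) N) {0..<k} * fact (N - k) = (fact N :: nat)"
proof (induction k)
  case 0 then show ?case by simp
next
  case (Suc k)
  have "fact (N - k) = (N - k) * (fact (N - Suc k) :: nat)"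
  proof -
    have "N - k = Suc (N - Suc k)" using Suc.prems by simp
    then show ?thesis by (simp only: fact_Suc) simp
  qed
  then show ?case using Suc by (simp add: algebra_simps)
qed

lemma t_ind_01:
  assumes "finite VH" "finite VF"
  shows "t_ind VH EH VF EF \<in> {0..1}"
proof (cases "card VF < card VH")
  case True then show ?thesis by (simp add: t_ind_def)
next
  case False
  let ?h = "card VH" and ?N = "card VF"
  have "ind VH EH VF EF \<le> card {f \<in> VH \<rightarrow>\<^sub>E VF. inj_on f VH}"
    unfolding ind_def by (rule card_mono) (use assms in \<open>auto intro: finite_subset[OF _ finite_PiE[of VH "\<lambda>_. VF"]]\<close>)
  also have "\<dots> = prod ((-) ?N) {0..<?h}"
    using card_inj_on_subset_funcset[OF assms(1) assms(2) order_refl] by simp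
  finally have le: "real (ind VH EH VF EF) \<le> real (prod ((-) ?N) {0..<?h})" by (simp only: of_nat_le_iff)
  have eq: "real (prod ((-) ?N) {0..<?h}) * fact (?N - ?h) = fact ?N"
    using prod_fact[of ?h ?N] False by (metis not_le of_nat_fact of_nat_mult)
  have "real (ind VH EH VF EF) * fact (?N - ?h) \<le> real (prod ((-) ?N) {0..<?h}) * fact (?N - ?h)"
    using le by (intro mult_right_mono) auto
  then have "real (ind VH EH VF EF) * fact (?N - ?h) \<le> fact ?N" unfolding eq .
  then have "real (ind VH EH VF EF) * fact (?N - ?h) / fact ?N \<le> 1"
    by (simp add: divide_le_eq)
  then show ?thesis using False by (simp add: t_ind_def)
qed



lemma diff_bound:
  fixes P P' n :: real
  assumes n: "n \<ge> 2" and P: "0 \<le> P" "P \<le> n*(n-1)" and d: "P \<le> P'" "P' \<le> P + 2*n"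
  shows "\<bar>P'/((n+1)*n) - P/(n*(n-1))\<bar> \<le> 2/(n+1)"
proof -
  have D: "(n+1)*n*(n-1) > 0" using n by simp
  have eq: "P'/((n+1)*n) - P/(n*(n-1)) = ((P'-P)*(n-1) - 2*P) / ((n+1)*n*(n-1))"
  proof -
    have "n \<noteq> 0" "n - 1 \<noteq> 0" "n + 1 \<noteq> 0" using n by auto
    have e1: "P'/((n+1)*n) = (P'*(n-1))/((n+1)*n*(n-1))"
      using \<open>n - 1 \<noteq> 0\<close> by (rule nonzero_mult_divide_mult_cancel_right[symmetric])
    have r: "(n+1)*n*(n-1) = (n*(n-1))*(n+1)" by (simp add: algebra_simps)
    have e2: "P/(n*(n-1)) = (P*(n+1))/((n+1)*n*(n-1))" unfolding r
      using \<open>n+1 \<noteq> 0\<close> by (rule nonzero_mult_divide_mult_cancel_right[symmetric])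
    have e3: "P'*(n-1) - P*(n+1) = (P'-P)*(n-1) - 2*P" by (simp add: algebra_simps)
    show ?thesis unfolding e1 e2 diff_divide_distrib[symmetric] e3 ..
  qed
  have a: "0 \<le> (P'-P)*(n-1)" "(P'-P)*(n-1) \<le> 2*n*(n-1)"
  proof -
    show "0 \<le> (P'-P)*(n-1)" by (rule mult_nonneg_nonneg) (use d n in auto)
    show "(P'-P)*(n-1) \<le> 2*n*(n-1)" by (rule mult_right_mono) (use d n in auto)
  qed
  have b: "\<bar>(P'-P)*(n-1) - 2*P\<bar> \<le> 2*n*(n-1)" using a P by linarith
  have "\<bar>((P'-P)*(n-1) - 2*P) / ((n+1)*n*(n-1))\<bar> = \<bar>(P'-P)*(n-1) - 2*P\<bar> / ((n+1)*n*(n-1))"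
    using D by (simp only: abs_divide abs_of_pos)
  also have "\<dots> \<le> 2*n*(n-1) / ((n+1)*n*(n-1))" using b D by (intro divide_right_mono) auto
  also have "\<dots> = 2/(n+1)"
  proof -
    have "n*(n-1) \<noteq> 0" using n by auto
    have r1: "2*n*(n-1) = 2*(n*(n-1))" and r2: "(n+1)*n*(n-1) = (n+1)*(n*(n-1))" by (simp_all add: algebra_simps)
    show ?thesis unfolding r1 r2 using \<open>n*(n-1) \<noteq> 0\<close> by (rule nonzero_mult_divide_mult_cancel_right)
  qed
  finally show ?thesis using eq by simp
qed



definition pairs :: "'v set set \<Rightarrow> 'v set \<Rightarrow> ('v \<times> 'v) set" where
  "pairs G T = {(u,v). u \<in> T \<and> v \<in> T \<and> u \<noteq> v \<and> {u,v} \<in> G}"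

lemma pairs_finite: "finite T \<Longrightarrow> finite (pairs G T)"
  by (rule finite_subset[of _ "T \<times> T"]) (auto simp: pairs_def)

lemma ind_K2: "ind K2_V K2_E VF EF = card (pairs EF VF)"
proof -
  let ?A = "{f \<in> K2_V \<rightarrow>\<^sub>E VF. inj_on f K2_V \<and>
      (\<forall>u\<in>K2_V. \<forall>v\<in>K2_V. u \<noteq> v \<longrightarrow> ({u, v} \<in> K2_E \<longleftrightarrow> {f u, f v} \<in> EF))}"
  let ?g = "\<lambda>f. (f (0::nat), f 1)"
  have inj: "inj_on ?g ?A"
  proof (rule inj_onI)
    fix f h assume f: "f \<in> ?A" and h: "h \<in> ?A" and e: "?g f = ?g h"
    show "f = h"
    proof (rule PiE_ext)
      show "f \<in> K2_V \<rightarrow>\<^sub>E VF" "h \<in> K2_V \<rightarrow>\<^sub>E VF" using f h by auto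
      show "\<And>x. x \<in> K2_V \<Longrightarrow> f x = h x" using e by (auto simp: K2_V_def)
    qed
  qed
  have img: "?g ` ?A = pairs EF VF"
  proof
    show "?g ` ?A \<subseteq> pairs EF VF"
    proof
      fix p assume "p \<in> ?g ` ?A"
      then obtain f where f: "f \<in> ?A" and p: "p = ?g f" by blast
      have K: "0 \<in> K2_V" "1 \<in> K2_V" "(0::nat) \<noteq> 1" by (auto simp: K2_V_def)
      have "f 0 \<in> VF" "f 1 \<in> VF" using f K by (auto simp del: PiE_iff intro: PiE_mem)
      moreover have "f 0 \<noteq> f 1" using f K inj_onD[of f K2_V 0 1] by auto
      moreover have "{0::nat, 1} \<in> K2_E" by (simp add: K2_E_def)
      then have "{f 0, f 1} \<in> EF" using f K by blast
      ultimately show "p \<in> pairs EF VF" using p by (simp add: pairs_def)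
    qed
    show "pairs EF VF \<subseteq> ?g ` ?A"
    proof
      fix p assume p: "p \<in> pairs EF VF"
      obtain u v where uv: "p = (u,v)" by (cases p)
      define f where "f = (\<lambda>i::nat. if i = 0 then u else if i = 1 then v else undefined)"
      have uv': "u \<in> VF" "v \<in> VF" "u \<noteq> v" "{u,v} \<in> EF" using p uv by (auto simp: pairs_def)
      have f0: "f 0 = u" and f1: "f 1 = v" "f (Suc 0) = v" by (simp_all add: f_def)
      have "f \<in> K2_V \<rightarrow>\<^sub>E VF" using uv' by (auto simp: f_def K2_V_def split: if_splits)
      moreover have "inj_on f K2_V" using uv'(3) by (simp add: K2_V_def f0 f1)
      moreover have "\<forall>a\<in>K2_V. \<forall>b\<in>K2_V. a \<noteq> b \<longrightarrow> ({a, b} \<in> K2_E \<longleftrightarrow> {f a, f b} \<in> EF)"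
      proof (intro ballI impI)
        fix a b assume ab: "a \<in> K2_V" "b \<in> K2_V" "a \<noteq> b"
        then have "(a = 0 \<and> b = 1) \<or> (a = 1 \<and> b = 0)" by (auto simp: K2_V_def)
        then show "{a, b} \<in> K2_E \<longleftrightarrow> {f a, f b} \<in> EF"
        proof
          assume "a = 0 \<and> b = 1" then show ?thesis using uv' by (simp add: K2_E_def f0 f1)
        next
          assume "a = 1 \<and> b = 0" then show ?thesis using uv' by (simp add: K2_E_def f0 f1 insert_commute)
        qed
      qed
      ultimately have "f \<in> ?A" by blast
      moreover have "?g f = p" using uv by (simp add: f_def)
      ultimately show "p \<in> ?g ` ?A" by force
    qed
  qed
  have "ind K2_V K2_E VF EF = card ?A" by (simp add: ind_def)
  also have "\<dots> = card (?g ` ?A)" using inj by (simp add: card_image)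
  also have "\<dots> = card (pairs EF VF)" using img by simp
  finally show ?thesis .
qed

lemma t_K2:
  assumes "finite VF"
  shows "t_ind K2_V K2_E VF EF = real (card (pairs EF VF)) / (real (card VF) * (real (card VF) - 1))"
proof (cases "card VF < 2")
  case True
  have "pairs EF VF = {}"
  proof (rule ccontr)
    assume "pairs EF VF \<noteq> {}"
    then obtain u v where "u \<in> VF" "v \<in> VF" "u \<noteq> v" by (auto simp: pairs_def)
    then have "card {u,v} \<le> card VF" using assms by (intro card_mono) auto
    then show False using True \<open>u \<noteq> v\<close> by simp
  qed
  then show ?thesis using True by (simp add: t_ind_def K2_V_def)
next
  case False
  let ?N = "card VF"
  have cK: "card K2_V = 2" by (simp add: K2_V_def)
  have f: "fact ?N = real ?N * (real ?N - 1) * fact (?N - 2)"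
  proof -
    have "?N = Suc (Suc (?N - 2))" using False by simp
    then have "(fact ?N :: real) = fact (Suc (Suc (?N - 2)))" by simp
    also have "\<dots> = real (Suc (Suc (?N - 2))) * real (Suc (?N - 2)) * fact (?N - 2)"
      by (simp only: fact_Suc of_nat_mult mult.assoc)
    also have "real (Suc (?N - 2)) = real ?N - 1" using False by (simp add: of_nat_diff)
    also have "real (Suc (Suc (?N - 2))) = real ?N" using False by simp
    finally show ?thesis .
  qed
  have "t_ind K2_V K2_E VF EF = real (card (pairs EF VF)) * fact (?N - 2) / fact ?N"
    using False by (simp add: t_ind_def cK ind_K2)
  also have "\<dots> = real (card (pairs EF VF)) / (real ?N * (real ?N - 1))"
  proof -
    have "fact (?N - 2) \<noteq> (0::real)" by simp
    then have "real (card (pairs EF VF)) * fact (?N - 2) / (real ?N * (real ?N - 1) * fact (?N - 2))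
       = real (card (pairs EF VF)) / (real ?N * (real ?N - 1))"
      by (rule nonzero_mult_divide_mult_cancel_right)
    then show ?thesis unfolding f .
  qed
  finally show ?thesis .
qed

lemma trunc_pairs:
  "pairs (trunc_edges \<xi> G n) (trunc_vertices \<xi> n) = pairs G (trunc_vertices \<xi> n)"
  by (auto simp: pairs_def trunc_edges_def)



locale xi_bij =
  fixes \<xi> :: "'v \<Rightarrow> nat"
  assumes bij: "bij_betw \<xi> UNIV {1..}"
begin

lemma inj_xi: "inj \<xi>" using bij by (simp add: bij_betw_def)
lemma range_xi: "range \<xi> = {1..}" using bij by (simp add: bij_betw_def)

lemma tv_vimage: "trunc_vertices \<xi> n = \<xi> -` {1..n}"
  by (auto simp: trunc_vertices_def)

lemma tv_finite: "finite (trunc_vertices \<xi> n)"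
  unfolding tv_vimage by (rule finite_vimageI) (auto simp: inj_xi)

lemma tv_card: "card (trunc_vertices \<xi> n) = n"
  unfolding tv_vimage using range_xi by (subst card_vimage_inj) (auto simp: inj_xi)

lemma tv_Suc: obtains w where "\<xi> w = Suc n" "w \<notin> trunc_vertices \<xi> n"
  "trunc_vertices \<xi> (Suc n) = insert w (trunc_vertices \<xi> n)"
proof -
  have "Suc n \<in> range \<xi>" using range_xi by auto
  then obtain w where w: "\<xi> w = Suc n" by auto
  have "trunc_vertices \<xi> (Suc n) = insert w (trunc_vertices \<xi> n)"
  proof
    show "trunc_vertices \<xi> (Suc n) \<subseteq> insert w (trunc_vertices \<xi> n)"
    proof
      fix x assume "x \<in> trunc_vertices \<xi> (Suc n)"
      then have "\<xi> x \<ge> 1" "\<xi> x \<le> Suc n" by (auto simp: trunc_vertices_def)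
      moreover have "\<xi> x = Suc n \<Longrightarrow> x = w" using w inj_xi by (metis injD)
      ultimately show "x \<in> insert w (trunc_vertices \<xi> n)" by (auto simp: trunc_vertices_def le_Suc_eq)
    qed
  qed (auto simp: trunc_vertices_def w)
  then show ?thesis
    by (intro that[OF w]) (auto simp: trunc_vertices_def w)
qed

definition P :: "'v set set \<Rightarrow> nat \<Rightarrow> nat" where
  "P G n = card (pairs G (trunc_vertices \<xi> n))"

lemma t_formula:
  "t_ind K2_V K2_E (trunc_vertices \<xi> n) (trunc_edges \<xi> G n) = real (P G n) / (real n * (real n - 1))"
  using t_K2[where VF="trunc_vertices \<xi> n" and EF="trunc_edges \<xi> G n", OF tv_finite] by (simp add: trunc_pairs tv_card P_def)

lemma P_mono: "P G n \<le> P G (Suc n)"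
proof -
  obtain w where w: "\<xi> w = Suc n" "w \<notin> trunc_vertices \<xi> n"
    "trunc_vertices \<xi> (Suc n) = insert w (trunc_vertices \<xi> n)" by (rule tv_Suc)
  have "finite (pairs G (trunc_vertices \<xi> (Suc n)))" by (rule pairs_finite[OF tv_finite])
  then show ?thesis unfolding P_def
    by (rule card_mono) (auto simp: pairs_def w(3))
qed

lemma P_step: "P G (Suc n) \<le> P G n + 2 * n"
proof -
  obtain w where w: "\<xi> w = Suc n" "w \<notin> trunc_vertices \<xi> n"
    "trunc_vertices \<xi> (Suc n) = insert w (trunc_vertices \<xi> n)" by (rule tv_Suc)
  let ?T = "trunc_vertices \<xi> n"
  have sub: "pairs G (trunc_vertices \<xi> (Suc n)) \<subseteq> pairs G ?T \<union> (?T \<times> {w} \<union> {w} \<times> ?T)"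
    by (auto simp: pairs_def w(3))
  have "P G (Suc n) \<le> card (pairs G ?T \<union> (?T \<times> {w} \<union> {w} \<times> ?T))"
    unfolding P_def by (rule card_mono[OF _ sub]) (auto simp: pairs_finite tv_finite)
  also have "\<dots> \<le> card (pairs G ?T) + (card (?T \<times> {w}) + card ({w} \<times> ?T))"
    by (meson add_left_mono card_Un_le order_trans)
  also have "\<dots> = P G n + 2 * n" by (simp add: P_def card_cartesian_product tv_card)
  finally show ?thesis .
qed

lemma small_diff:
  fixes G
  defines "x \<equiv> \<lambda>n. t_ind K2_V K2_E (trunc_vertices \<xi> n) (trunc_edges \<xi> G n)"
  shows "\<forall>e>0. \<exists>N. \<forall>n\<ge>N. \<bar>x (Suc n) - x n\<bar> < e"
proof (intro allI impI)
  fix e :: real assume "e > 0"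
  then obtain N0 where N0: "inverse (real (Suc N0)) < e/2" using reals_Archimedean half_gt_zero by blast
  show "\<exists>N. \<forall>n\<ge>N. \<bar>x (Suc n) - x n\<bar> < e"
  proof (intro exI[of _ "max N0 2"] allI impI)
    fix n assume n: "max N0 2 \<le> n"
    have x01: "x n \<le> 1" using t_ind_01[where VH=K2_V and EH=K2_E and VF="trunc_vertices \<xi> n" and EF="trunc_edges \<xi> G n", OF _ tv_finite] by (simp add: x_def K2_V_def)
    have pos: "real n * (real n - 1) > 0" using n by simp
    have Pn: "real (P G n) \<le> real n * (real n - 1)"
      using x01 pos by (simp add: x_def t_formula pos_divide_le_eq)
    have "\<bar>real (P G (Suc n)) / ((real n + 1) * real n) - real (P G n) / (real n * (real n - 1))\<bar> \<le> 2 / (real n + 1)"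
      by (rule diff_bound) (use n Pn P_mono[of G n] P_step[of G n] in auto)
    moreover have "x (Suc n) = real (P G (Suc n)) / ((real n + 1) * real n)"
      by (simp add: x_def t_formula algebra_simps)
    moreover have "x n = real (P G n) / (real n * (real n - 1))" by (simp add: x_def t_formula)
    moreover have "2 / (real n + 1) < e"
    proof -
      have "2 / (real n + 1) \<le> 2 * inverse (real (Suc N0))" using n
        by (simp add: field_simps)
      then show ?thesis using N0 by linarith
    qed
    ultimately show "\<bar>x (Suc n) - x n\<bar> < e" by linarith
  qed
qed

end



primrec w :: "nat \<Rightarrow> nat" where
  "w 0 = 2" | "w (Suc k) = w k * w k"

lemma w_ge2: "w k \<ge> 2"
proof (induction k)
  case (Suc k)
  have "2 * 1 \<le> w k * w k" by (rule mult_le_mono) (use Suc in auto)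
  then show ?case by simp
qed simp

lemma w_less: "w k < w (Suc k)"
proof -
  have "w k * 1 < w k * w k" using w_ge2[of k] by (intro mult_strict_left_mono) auto
  then show ?thesis by simp
qed

lemma w_smono: "strict_mono w" unfolding strict_mono_Suc_iff using w_less by blast

lemma w_ge: "w k \<ge> k + 2"
proof (induction k)
  case (Suc k) then show ?case using w_less[of k] by linarith
qed simp

lemma w_disj: "w k \<le> j \<Longrightarrow> j < w (Suc k) \<Longrightarrow> w k' \<le> j \<Longrightarrow> j < w (Suc k') \<Longrightarrow> k = k'"
proof (rule ccontr)
  assume H: "w k \<le> j" "j < w (Suc k)" "w k' \<le> j" "j < w (Suc k')" "k \<noteq> k'"
  show False
  proof (cases "k < k'")
    case True
    then have "w (Suc k) \<le> w k'" using strict_mono_less_eq[OF w_smono, of "Suc _"] by (metis Suc_leI)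
    then show False using H by simp
  next
    case False
    then have "k' < k" using H by simp
    then have "w (Suc k') \<le> w k" using strict_mono_less_eq[OF w_smono, of "Suc _"] by (metis Suc_leI)
    then show False using H by simp
  qed
qed

definition tau :: "real \<Rightarrow> real \<Rightarrow> nat \<Rightarrow> real" where
  "tau a b n = (if \<exists>k. even k \<and> w k \<le> n \<and> n < w (Suc k) then b else a)"

lemma tau_window: "w k \<le> j \<Longrightarrow> j < w (Suc k) \<Longrightarrow> tau a b j = (if even k then b else a)"
  unfolding tau_def using w_disj by (auto; blast)

lemma tau_range: "a \<le> b \<Longrightarrow> tau a b n \<in> {a..b}"
  by (simp add: tau_def)

primrec Q :: "real \<Rightarrow> real \<Rightarrow> nat \<Rightarrow> nat" where
  "Q a b 0 = 0"
| "Q a b (Suc n) = Q a b n + (if real (Q a b n) < tau a b n * (real n * (real n - 1)) then 2 * n else 0)"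

definition cc :: "real \<Rightarrow> real \<Rightarrow> nat \<Rightarrow> bool" where
  "cc a b n \<longleftrightarrow> real (Q a b n) < tau a b n * (real n * (real n - 1))"

definition FF :: "real \<Rightarrow> real \<Rightarrow> real \<Rightarrow> nat \<Rightarrow> real" where
  "FF a b T n = real (Q a b n) - T * (real n * (real n - 1))"

lemma nn: "0 \<le> real n * (real n - 1)"
  by (cases n) auto

lemma sq_Suc: "real (Suc n) * (real (Suc n) - 1) = real n * (real n - 1) + 2 * real n"
  by (simp add: algebra_simps)

lemma FF_Suc: "FF a b T (Suc n) = FF a b T n + (if cc a b n then 2 * real n else 0) - 2 * (T * real n)"
  unfolding FF_def cc_def by (simp only: Q.simps of_nat_add sq_Suc) (auto simp: algebra_simps)

lemma Tn: "0 \<le> T \<Longrightarrow> T \<le> 1 \<Longrightarrow> 0 \<le> T * real n \<and> T * real n \<le> real n"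
  by (simp add: mult_left_le_one_le)

lemma FF_lower:
  assumes "0 \<le> a" "a \<le> b" "b \<le> 1"
  shows "FF a b a n \<ge> - 2 * real n"
proof (induction n)
  case 0 then show ?case by (simp add: FF_def)
next
  case (Suc n)
  have t: "a * (real n * (real n - 1)) \<le> tau a b n * (real n * (real n - 1))"
    using tau_range[OF assms(2), of n] nn[of n] by (intro mult_right_mono) auto
  have an: "0 \<le> a * real n \<and> a * real n \<le> real n" using Tn assms by auto
  show ?case
  proof (cases "cc a b n")
    case True then show ?thesis using Suc an FF_Suc[of a b a n] by simp
  next
    case False
    then have "FF a b a n \<ge> 0" using t by (simp add: cc_def FF_def)
    then show ?thesis using an FF_Suc[of a b a n] False by simp
  qed
qed

lemma FF_upper:
  assumes "0 \<le> a" "a \<le> b" "b \<le> 1"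
  shows "FF a b b n \<le> 2 * real n"
proof (induction n)
  case 0 then show ?case by (simp add: FF_def)
next
  case (Suc n)
  have t: "tau a b n * (real n * (real n - 1)) \<le> b * (real n * (real n - 1))"
    using tau_range[OF assms(2), of n] nn[of n] by (intro mult_right_mono) auto
  have bn: "0 \<le> b * real n \<and> b * real n \<le> real n" using Tn assms by auto
  show ?case
  proof (cases "cc a b n")
    case True
    then have "FF a b b n < 0" using t by (simp add: cc_def FF_def)
    then show ?thesis using bn FF_Suc[of a b b n] True by simp
  next
    case False then show ?thesis using Suc bn FF_Suc[of a b b n] by simp
  qed
qed

lemma Q_le: "real (Q a b n) \<le> real n * (real n - 1)"
proof (induction n)
  case (Suc n)
  have "real (Q a b (Suc n)) \<le> real (Q a b n) + 2 * real n" by simp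
  then show ?case using Suc sq_Suc[of n] by linarith
qed simp

lemma FF_track:
  assumes "0 \<le> T" "T \<le> 1" "tau a b n = T"
  shows "\<bar>FF a b T (Suc n)\<bar> \<le> max \<bar>FF a b T n\<bar> (2 * real n)"
proof -
  have tn: "0 \<le> T * real n \<and> T * real n \<le> real n" using Tn assms by auto
  have "cc a b n \<longleftrightarrow> FF a b T n < 0" using assms(3) by (simp add: cc_def FF_def)
  then show ?thesis using FF_Suc[of a b T n] tn by (cases "cc a b n") (auto simp: abs_if max_def)
qed

lemma FF_window:
  assumes "0 \<le> T" "T \<le> 1" "m \<le> n" "\<And>j. m \<le> j \<Longrightarrow> j < n \<Longrightarrow> tau a b j = T"
  shows "\<bar>FF a b T n\<bar> \<le> max \<bar>FF a b T m\<bar> (2 * real n)"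
  using assms(3,4)
proof (induction n rule: dec_induct)
  case base then show ?case by simp
next
  case (step n)
  have "\<bar>FF a b T (Suc n)\<bar> \<le> max \<bar>FF a b T n\<bar> (2 * real n)"
    by (rule FF_track) (use assms step in auto)
  moreover have "\<bar>FF a b T n\<bar> \<le> max \<bar>FF a b T m\<bar> (2 * real n)" using step by auto
  ultimately show ?case by (simp add: max_def split: if_splits)
qed

lemma FF_abs_le: "0 \<le> T \<Longrightarrow> T \<le> 1 \<Longrightarrow> \<bar>FF a b T m\<bar> \<le> real m * real m"
proof -
  assume T: "0 \<le> T" "T \<le> 1"
  have "0 \<le> T * (real m * (real m - 1))" "T * (real m * (real m - 1)) \<le> real m * (real m - 1)"
    using T nn[of m] by (auto simp: mult_left_le_one_le)
  moreover have "real m * (real m - 1) \<le> real m * real m" by (simp add: algebra_simps)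
  ultimately show ?thesis using Q_le[of a b m] by (simp add: FF_def abs_if)
qed



context xi_bij
begin

definition Gc :: "real \<Rightarrow> real \<Rightarrow> 'v set set" where
  "Gc a b = {{u,v} | u v. \<xi> u < \<xi> v \<and> cc a b (\<xi> v - 1)}"

lemma Gc_graph: "Gc a b \<in> graphs_on UNIV"
proof -
  have "card {u, v} = 2" if "\<xi> u < \<xi> v" for u v :: 'v
  proof -
    have "u \<noteq> v" using that by auto
    then show ?thesis by simp
  qed
  then show ?thesis by (auto simp: Gc_def graphs_on_def two_subsets_def)
qed

lemma Gc_edge:
  assumes "\<xi> u \<le> n" "\<xi> x = Suc n"
  shows "{u, x} \<in> Gc a b \<longleftrightarrow> cc a b n"
proof
  assume "{u, x} \<in> Gc a b"
  then obtain p q where pq: "{u,x} = {p,q}" "\<xi> p < \<xi> q" "cc a b (\<xi> q - 1)" by (auto simp: Gc_def)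
  from pq(1) have "(u = p \<and> x = q) \<or> (u = q \<and> x = p)" by (auto simp: doubleton_eq_iff)
  then show "cc a b n" using pq assms by auto
next
  assume "cc a b n"
  then show "{u, x} \<in> Gc a b" using assms unfolding Gc_def by force
qed

lemma P_Gc: "P (Gc a b) n = Q a b n"
proof (induction n)
  case 0
  have "trunc_vertices \<xi> 0 = {}" by (simp add: trunc_vertices_def)
  then show ?case by (simp add: P_def pairs_def)
next
  case (Suc n)
  obtain x where x: "\<xi> x = Suc n" "x \<notin> trunc_vertices \<xi> n"
    "trunc_vertices \<xi> (Suc n) = insert x (trunc_vertices \<xi> n)" by (rule tv_Suc)
  let ?T = "trunc_vertices \<xi> n"
  have K: "u \<in> ?T \<Longrightarrow> {u, x} \<in> Gc a b \<longleftrightarrow> cc a b n" for u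
    using Gc_edge[OF _ x(1)] by (auto simp: trunc_vertices_def)
  have K': "u \<in> ?T \<Longrightarrow> {x, u} \<in> Gc a b \<longleftrightarrow> cc a b n" for u
    using K by (simp add: insert_commute)
  have eq: "pairs (Gc a b) (trunc_vertices \<xi> (Suc n)) =
      pairs (Gc a b) ?T \<union> (if cc a b n then ?T \<times> {x} \<union> {x} \<times> ?T else {})"
    unfolding x(3) using x(2) K K' by (auto simp: pairs_def)
  have fin: "finite (pairs (Gc a b) ?T)" "finite ?T" by (auto intro: pairs_finite tv_finite)
  have d1: "pairs (Gc a b) ?T \<inter> (?T \<times> {x} \<union> {x} \<times> ?T) = {}" using x(2) by (auto simp: pairs_def)
  have d2: "?T \<times> {x} \<inter> {x} \<times> ?T = {}" using x(2) by auto
  show ?case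
  proof (cases "cc a b n")
    case True
    have "P (Gc a b) (Suc n) = card (pairs (Gc a b) ?T) + card (?T \<times> {x} \<union> {x} \<times> ?T)"
      unfolding P_def eq using True fin d1 by (simp add: card_Un_disjoint)
    also have "card (?T \<times> {x} \<union> {x} \<times> ?T) = 2 * n"
      using fin d2 by (simp add: card_Un_disjoint card_cartesian_product tv_card)
    finally show ?thesis using Suc True by (simp add: P_def cc_def)
  next
    case False
    then show ?thesis using Suc eq by (simp add: P_def cc_def)
  qed
qed

end



lemma arch_eps: "(e::real) > 0 \<Longrightarrow> \<exists>K. \<forall>n. n \<ge> K + 2 \<longrightarrow> 2 / (real n - 1) < e"
proof -
  assume "e > 0"
  then obtain K where K: "inverse (real (Suc K)) < e/2" using reals_Archimedean half_gt_zero by blast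
  have "2 / (real n - 1) < e" if "n \<ge> K + 2" for n
  proof -
    have "real n - 1 \<ge> real (Suc K)" using that by simp
    then have "2 / (real n - 1) \<le> 2 * inverse (real (Suc K))"
      by (simp add: field_simps)
    then show ?thesis using K by linarith
  qed
  then show ?thesis by blast
qed

context xi_bij
begin

lemma x_Gc: "t_ind K2_V K2_E (trunc_vertices \<xi> n) (trunc_edges \<xi> (Gc a b) n)
   = real (Q a b n) / (real n * (real n - 1))"
  by (simp add: t_formula P_Gc)

lemma x_minus:
  assumes "n \<ge> 2"
  shows "real (Q a b n) / (real n * (real n - 1)) - T = FF a b T n / (real n * (real n - 1))"
proof -
  have "real n * (real n - 1) \<noteq> 0" using assms by simp
  then show ?thesis by (simp add: FF_def diff_divide_distrib)
qed

lemma div2: "n \<ge> 2 \<Longrightarrow> 2 * real n / (real n * (real n - 1)) = 2 / (real n - 1)"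
proof -
  assume n: "n \<ge> 2"
  then have "real n \<noteq> 0" by simp
  then show ?thesis by (metis mult.commute nonzero_mult_divide_mult_cancel_left)
qed

lemma part3:
  assumes ab: "0 \<le> a" "a \<le> b" "b \<le> 1"
  shows "cl (\<lambda>n. t_ind K2_V K2_E (trunc_vertices \<xi> n) (trunc_edges \<xi> (Gc a b) n)) = {a..b}"
proof -
  define x where "x = (\<lambda>n. t_ind K2_V K2_E (trunc_vertices \<xi> n) (trunc_edges \<xi> (Gc a b) n))"
  have xq: "x n = real (Q a b n) / (real n * (real n - 1))" for n by (simp add: x_def x_Gc)
  have lo: "x n \<ge> a - 2 / (real n - 1)" if "n \<ge> 2" for n
  proof -
    have D: "real n * (real n - 1) > 0" using that by simp
    have "- 2 * real n / (real n * (real n - 1)) \<le> FF a b a n / (real n * (real n - 1))"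
      using FF_lower[OF ab, of n] D by (intro divide_right_mono) auto
    then show ?thesis using x_minus[OF that, of a b a] div2[OF that] xq[of n] by simp
  qed
  have up: "x n \<le> b + 2 / (real n - 1)" if "n \<ge> 2" for n
  proof -
    have D: "real n * (real n - 1) > 0" using that by simp
    have "FF a b b n / (real n * (real n - 1)) \<le> 2 * real n / (real n * (real n - 1))"
      using FF_upper[OF ab, of n] D by (intro divide_right_mono) auto
    then show ?thesis using x_minus[OF that, of a b b] div2[OF that] xq[of n] by simp
  qed
  have endp: "\<bar>x (w (Suc k)) - (if even k then b else a)\<bar> \<le> 2 / (real (w (Suc k)) - 1)" for k
  proof -
    define T where "T = (if even k then b else a)"
    define M where "M = w (Suc k)"
    have T: "0 \<le> T" "T \<le> 1" using ab by (auto simp: T_def)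
    have M2: "M \<ge> 2" unfolding M_def by (rule w_ge2)
    have "\<bar>FF a b T M\<bar> \<le> max \<bar>FF a b T (w k)\<bar> (2 * real M)"
      unfolding M_def
      by (rule FF_window[OF T]) (use w_less[of k] tau_window[of k] in \<open>auto simp: T_def\<close>)
    moreover have "\<bar>FF a b T (w k)\<bar> \<le> real M"
      using FF_abs_le[OF T, of a b "w k"] by (simp add: M_def)
    ultimately have F: "\<bar>FF a b T M\<bar> \<le> 2 * real M" by simp
    have D: "real M * (real M - 1) > 0" using M2 by simp
    have "\<bar>x M - T\<bar> = \<bar>FF a b T M\<bar> / (real M * (real M - 1))"
      using x_minus[OF M2, of a b T] xq[of M] D by (simp add: abs_divide)
    also have "\<dots> \<le> 2 * real M / (real M * (real M - 1))"
      using F D by (intro divide_right_mono) auto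
    also have "\<dots> = 2 / (real M - 1)" using div2[OF M2] .
    finally show ?thesis by (simp add: T_def M_def)
  qed
  have freq: "(if even k0 then b else a) \<in> cl x" for k0
    unfolding cl_iff
  proof (intro allI impI)
    fix e :: real and N assume "e > 0"
    from arch_eps[OF this] obtain K where K: "\<And>n. n \<ge> K + 2 \<Longrightarrow> 2 / (real n - 1) < e" by blast
    define k where "k = 2 * max K N + (if even k0 then 0 else 1)"
    have par: "even k = even k0" by (simp add: k_def)
    have big: "w (Suc k) \<ge> k + 3" using w_ge[of "Suc k"] by simp
    have "w (Suc k) \<ge> N" "w (Suc k) \<ge> K + 2" using big by (auto simp: k_def)
    moreover have "\<bar>x (w (Suc k)) - (if even k0 then b else a)\<bar> < e"
      using endp[of k] K[OF \<open>w (Suc k) \<ge> K + 2\<close>] par by simp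
    ultimately show "\<exists>n\<ge>N. \<bar>x n - (if even k0 then b else a)\<bar> < e" by blast
  qed
  have bcl: "b \<in> cl x" using freq[of 0] by simp
  have acl: "a \<in> cl x" using freq[of 1] by simp
  have sub: "cl x \<subseteq> {a..b}"
  proof
    fix L assume L: "L \<in> cl x"
    show "L \<in> {a..b}"
    proof (rule ccontr)
      assume "L \<notin> {a..b}"
      then have "L < a \<or> L > b" by auto
      then show False
      proof
        assume La: "L < a"
        define e where "e = (a - L) / 2"
        have e: "e > 0" using La by (simp add: e_def)
        from arch_eps[OF e] obtain K where K: "\<And>n. n \<ge> K + 2 \<Longrightarrow> 2 / (real n - 1) < e" by blast
        from L[unfolded cl_iff, rule_format, OF e, of "K+2"] obtain n where n: "n \<ge> K + 2" "\<bar>x n - L\<bar> < e" by blast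
        have "x n \<ge> a - 2 / (real n - 1)" using lo n by simp
        then show False using K[OF n(1)] n(2) by (simp add: e_def abs_if split: if_splits)
      next
        assume Lb: "L > b"
        define e where "e = (L - b) / 2"
        have e: "e > 0" using Lb by (simp add: e_def)
        from arch_eps[OF e] obtain K where K: "\<And>n. n \<ge> K + 2 \<Longrightarrow> 2 / (real n - 1) < e" by blast
        from L[unfolded cl_iff, rule_format, OF e, of "K+2"] obtain n where n: "n \<ge> K + 2" "\<bar>x n - L\<bar> < e" by blast
        have "x n \<le> b + 2 / (real n - 1)" using up n by simp
        then show False using K[OF n(1)] n(2) by (simp add: e_def abs_if split: if_splits)
      qed
    qed
  qed
  have sm: "\<forall>e>0. \<exists>N. \<forall>n\<ge>N. \<bar>x (Suc n) - x n\<bar> < e" unfolding x_def by (rule small_diff)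
  have "{a..b} \<subseteq> cl x"
    using cl_convex[OF sm acl bcl] by auto
  with sub show ?thesis unfolding x_def by blast
qed

end


lemma S: "S_lim \<xi> VH EH G = cl (\<lambda>n. t_ind VH EH (trunc_vertices \<xi> n) (trunc_edges \<xi> G n))"
  by (simp add: S_lim_def cl_def)

theorem theorem4p1:
  fixes \<xi> :: "'v \<Rightarrow> nat"
  assumes "bij_betw \<xi> UNIV {1..}"
  shows "(\<forall>(VH :: 'a set) EH G. finite_simple_graph VH EH \<and> G \<in> graphs_on (UNIV :: 'v set) \<longrightarrow>
            closed (S_lim \<xi> VH EH G) \<and> S_lim \<xi> VH EH G \<noteq> {} \<and> S_lim \<xi> VH EH G \<subseteq> {0..1})
       \<and> (\<forall>G \<in> graphs_on (UNIV :: 'v set). \<exists>a b. 0 \<le> a \<and> a \<le> b \<and> b \<le> 1 \<and>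
            S_lim \<xi> K2_V K2_E G = {a..b})
       \<and> (\<forall>a b :: real. 0 \<le> a \<and> a \<le> b \<and> b \<le> 1 \<longrightarrow>
            (\<exists>G \<in> graphs_on (UNIV :: 'v set). S_lim \<xi> K2_V K2_E G = {a..b}))"
proof -
  interpret xi_bij \<xi> using assms by unfold_locales
  have P1: "closed (S_lim \<xi> VH EH G) \<and> S_lim \<xi> VH EH G \<noteq> {} \<and> S_lim \<xi> VH EH G \<subseteq> {0..1}"
    if "finite VH" for VH :: "'a set" and EH G
    unfolding S by (rule cl_basic) (rule t_ind_01[OF that tv_finite])
  have A1: "\<forall>(VH :: 'a set) EH G. finite_simple_graph VH EH \<and> G \<in> graphs_on (UNIV :: 'v set) \<longrightarrow>
            closed (S_lim \<xi> VH EH G) \<and> S_lim \<xi> VH EH G \<noteq> {} \<and> S_lim \<xi> VH EH G \<subseteq> {0..1}"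
    using P1 by (auto simp: finite_simple_graph_def)
  have A2: "\<forall>G \<in> graphs_on (UNIV :: 'v set). \<exists>a b. 0 \<le> a \<and> a \<le> b \<and> b \<le> 1 \<and>
            S_lim \<xi> K2_V K2_E G = {a..b}"
  proof
    fix G :: "'v set set"
    show "\<exists>a b. 0 \<le> a \<and> a \<le> b \<and> b \<le> 1 \<and> S_lim \<xi> K2_V K2_E G = {a..b}"
      unfolding S
    proof (rule cl_interval)
      show "t_ind K2_V K2_E (trunc_vertices \<xi> n) (trunc_edges \<xi> G n) \<in> {0..1}" for n
        by (rule t_ind_01[OF _ tv_finite]) (simp add: K2_V_def)
      show "\<forall>e>0. \<exists>N. \<forall>n\<ge>N. \<bar>t_ind K2_V K2_E (trunc_vertices \<xi> (Suc n)) (trunc_edges \<xi> G (Suc n))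
          - t_ind K2_V K2_E (trunc_vertices \<xi> n) (trunc_edges \<xi> G n)\<bar> < e"
        by (rule small_diff)
    qed
  qed
  have A3: "\<forall>a b :: real. 0 \<le> a \<and> a \<le> b \<and> b \<le> 1 \<longrightarrow>
            (\<exists>G \<in> graphs_on (UNIV :: 'v set). S_lim \<xi> K2_V K2_E G = {a..b})"
    using Gc_graph part3 unfolding S by blast
  show ?thesis using A1 A2 A3 by blast
qed

end
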